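(* (a) For every $d \ge 1$, $\dfrac{F_n^- - \ln n}{\ln\ln n} \to 0$ in probability as $n \to \infty$. (b) If $d \ge 2$, then $\dfrac{F_n^- - \ln n}{\ln\ln n} \to 0$ almost surely.
   Context: Fix an integer $d \ge 1$. Let $X^{(1)}, X^{(2)}, \dots$ be i.i.d. random vectors in $\mathbb{R}^d$ with independent Exponential$(1)$ coordinates. For $x,y \in \mathbb{R}^d$ write $x \prec y$ if $x_j<y_j$ for all $j$, $x \le y$ if $x_j \le y_j$ for all $j$, and $x_+ := \sum_j x_j$. The record-setting region at time $n$ is $\mathrm{RS}_n := \{x \in \mathbb{R}^d : 0 \le x,\ x \not\prec X^{(i)} \text{ for all } 1 \le i \le n\}$, and its frontier $F_n$ is the topological boundary of $\mathrm{RS}_n$ relative to $[0,\infty)^d$. Define $F_n^- := \min\{x_+ : x \in F_n\}$. *)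

theory Defs
  imports "HOL-Probability.Probability"
begin

definition strict_below :: "real^'d \<Rightarrow> real^'d \<Rightarrow> bool" where
  "strict_below x y \<longleftrightarrow> (\<forall>j. x $ j < y $ j)"

definition orthant :: "(real^'d) set" where
  "orthant = {x. \<forall>j. 0 \<le> x $ j}"

definition RS :: "(nat \<Rightarrow> real^'d) \<Rightarrow> nat \<Rightarrow> (real^'d) set" where
  "RS X n = {x \<in> orthant. \<forall>i\<in>{1..n}. \<not> strict_below x (X i)}"

definition frontierRS :: "(nat \<Rightarrow> real^'d) \<Rightarrow> nat \<Rightarrow> (real^'d) set" where
  "frontierRS X n = (subtopology euclidean orthant) frontier_of (RS X n)"

definition Fminus :: "(nat \<Rightarrow> real^'d) \<Rightarrow> nat \<Rightarrow> real" where
  "Fminus X n = Inf ((\<lambda>x. \<Sum>j\<in>UNIV. x $ j) ` frontierRS X n)"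

end

theory Submission
  imports Defs "HOL-Real_Asymp.Real_Asymp"
begin


lemma RS_closedin:
  fixes P :: "nat \<Rightarrow> real^'d"
  shows "closedin (subtopology euclidean orthant) (RS P n)"
proof -
  have e: "{x::real^'d. \<forall>i\<in>{1..n}. \<exists>j. P i $ j \<le> x $ j} = (\<Inter>i\<in>{1..n}. \<Union>j. {x. P i $ j \<le> x $ j})"
    by auto
  have c: "closed {x::real^'d. \<forall>i\<in>{1..n}. \<exists>j. P i $ j \<le> x $ j}"
    unfolding e by (intro closed_INT closed_Union ballI finite_imageI finite_UNIV) (auto intro!: closed_Collect_le continuous_intros)
  have "RS P n = {x::real^'d. \<forall>i\<in>{1..n}. \<exists>j. P i $ j \<le> x $ j} \<inter> orthant"
    by (auto simp: RS_def strict_below_def not_less)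
  then show ?thesis using c by (auto simp: closedin_subtopology)
qed

lemma frontierRS_sub: "frontierRS P n \<subseteq> RS P n"
  unfolding frontierRS_def frontier_of_def using closure_of_closedin[OF RS_closedin] by auto

lemma frontierRS_orthant: "frontierRS P n \<subseteq> orthant"
  using frontierRS_sub by (auto simp: RS_def)

lemma in_frontierRS:
  assumes x: "x \<in> RS P n" and w: "\<And>e. e > 0 \<Longrightarrow> \<exists>w\<in>orthant - RS P n. dist w x < e"
  shows "x \<in> frontierRS P n"
proof -
  have "x \<in> (subtopology euclidean orthant) closure_of (RS P n)"
    using closure_of_closedin[OF RS_closedin] x by auto
  moreover have "x \<notin> (subtopology euclidean orthant) interior_of (RS P n)"
  proof
    assume "x \<in> (subtopology euclidean orthant) interior_of (RS P n)"
    then obtain T where T: "openin (subtopology euclidean orthant) T" "x \<in> T" "T \<subseteq> RS P n"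
      by (auto simp: interior_of_def)
    then obtain T' where T': "open T'" "T = T' \<inter> orthant" by (auto simp: openin_subtopology)
    then obtain e where e: "e > 0" "ball x e \<subseteq> T'" using T(2) open_contains_ball by blast
    obtain w where "w \<in> orthant - RS P n" "dist w x < e" using w e(1) by blast
    then have "w \<in> ball x e" by (simp add: dist_commute)
    then show False using e T T' \<open>w \<in> orthant - RS P n\<close> by blast
  qed
  ultimately show ?thesis unfolding frontierRS_def frontier_of_def by blast
qed

definition vsum :: "real^'d \<Rightarrow> real" where "vsum x = (\<Sum>j\<in>UNIV. x $ j)"

lemma frontier_point_below:
  fixes P :: "nat \<Rightarrow> real^'d"
  assumes n: "n \<ge> 1" and pos: "\<And>j. P 1 $ j > 0" and y: "y \<in> RS P n"
  shows "\<exists>z\<in>frontierRS P n. vsum z \<le> vsum y"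
proof -
  define C where "C = {x::real^'d. \<forall>i\<in>{1..n}. \<exists>j. P i $ j \<le> x $ j}"
  have e: "C = (\<Inter>i\<in>{1..n}. \<Union>j. {x. P i $ j \<le> x $ j})"
    by (auto simp: C_def)
  have cC: "closed C"
    unfolding e by (intro closed_INT closed_Union ballI finite_imageI finite_UNIV) (auto intro!: closed_Collect_le continuous_intros)
  have RSeq: "RS P n = orthant \<inter> C"
    by (auto simp: RS_def strict_below_def not_less C_def)
  have yo: "y \<in> orthant" using y by (auto simp: RS_def)
  define T where "T = {t. 0 \<le> t \<and> t \<le> 1 \<and> t *\<^sub>R y \<in> RS P n}"
  have scal_orth: "t *\<^sub>R y \<in> orthant" if "t \<ge> 0" for t
    using yo that by (auto simp: orthant_def)
  have Teq: "T = {0..1} \<inter> (\<lambda>t. t *\<^sub>R y) -` C"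
    using scal_orth by (auto simp: T_def RSeq)
  have cT: "closed T" unfolding Teq
    by (intro closed_Int closed_atLeastAtMost continuous_closed_vimage cC) (auto intro!: continuous_intros)
  have T1: "1 \<in> T" using y by (simp add: T_def)
  have bT: "bdd_below T" by (auto simp: T_def bdd_below_def)
  define l where "l = Inf T"
  have lT: "l \<in> T" unfolding l_def using cT T1 bT closed_contains_Inf by blast
  have "0 \<notin> T"
  proof
    assume "0 \<in> T"
    then have "(0::real^'d) \<in> RS P n" by (simp add: T_def)
    moreover have "strict_below 0 (P 1)" using pos by (simp add: strict_below_def)
    ultimately show False using n by (auto simp: RS_def)
  qed
  then have "l \<noteq> 0" using lT by auto
  then have l0: "l > 0" using lT by (auto simp: T_def)
  have l1: "l \<le> 1" using lT by (simp add: T_def)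
  define z where "z = l *\<^sub>R y"
  have zRS: "z \<in> RS P n" using lT by (simp add: T_def z_def)
  have vy: "vsum y \<ge> 0" using yo by (auto simp: vsum_def orthant_def intro!: sum_nonneg)
  have vz: "vsum z = l * vsum y" by (simp add: z_def vsum_def sum_distrib_left)
  have "l * vsum y \<le> 1 * vsum y" by (rule mult_right_mono[OF l1 vy])
  then have "vsum z \<le> vsum y" using vz by simp
  moreover have "z \<in> frontierRS P n"
  proof (rule in_frontierRS[OF zRS])
    fix e :: real assume e: "e > 0"
    define t where "t = max 0 (l - e / (norm y + 1))"
    have t0: "t \<ge> 0" by (simp add: t_def)
    have tl: "t < l" using l0 e by (simp add: t_def) (smt (verit) divide_pos_pos norm_ge_zero)
    have "t \<notin> T"
    proof
      assume "t \<in> T"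
      then have "l \<le> t" unfolding l_def using bT by (rule cInf_lower)
      then show False using tl by simp
    qed
    then have w: "t *\<^sub>R y \<in> orthant - RS P n" using t0 tl l1 scal_orth by (auto simp: T_def)
    have "dist (t *\<^sub>R y) z = norm ((l - t) *\<^sub>R y)"
      by (simp add: z_def dist_norm algebra_simps norm_minus_commute)
    also have "\<dots> = (l - t) * norm y" using tl by simp
    also have "\<dots> \<le> e / (norm y + 1) * norm y"
      using tl by (intro mult_right_mono) (auto simp: t_def)
    also have "\<dots> < e" using e
    proof -
      have "norm y / (norm y + 1) < 1" by (simp add: divide_less_eq) (smt (verit) norm_ge_zero)
      then have "e * (norm y / (norm y + 1)) < e * 1" using e by (intro mult_strict_left_mono) auto
      then show ?thesis by simp
    qed
    finally show "\<exists>w\<in>orthant - RS P n. dist w z < e" using w by blast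
  qed
  ultimately show ?thesis by blast
qed

lemma vsum_nonneg: "x \<in> orthant \<Longrightarrow> vsum x \<ge> 0"
  by (auto simp: vsum_def orthant_def intro!: sum_nonneg)

lemma Fminus_eq: "Fminus P n = Inf (vsum ` frontierRS P n)"
  by (simp add: Fminus_def vsum_def)

lemma Fminus_upper:
  fixes P :: "nat \<Rightarrow> real^'d"
  assumes n: "n \<ge> 1" and pos: "\<And>j. P 1 $ j > 0" and y: "y \<in> RS P n"
  shows "Fminus P n \<le> vsum y"
proof -
  obtain z where z: "z \<in> frontierRS P n" "vsum z \<le> vsum y" using frontier_point_below[OF assms] by blast
  have "bdd_below (vsum ` frontierRS P n)"
    using frontierRS_orthant vsum_nonneg by (intro bdd_belowI[where m=0]) blast
  then have "Inf (vsum ` frontierRS P n) \<le> vsum z" using z(1) by (simp add: cInf_lower)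
  then show ?thesis using z(2) by (simp add: Fminus_eq)
qed

lemma Fminus_lower:
  fixes P :: "nat \<Rightarrow> real^'d"
  assumes n: "n \<ge> 1" and pos: "\<And>i j. i \<in> {1..n} \<Longrightarrow> P i $ j > 0"
    and cov: "\<And>x. x \<in> orthant \<Longrightarrow> vsum x \<le> s \<Longrightarrow> \<exists>i\<in>{1..n}. strict_below x (P i)"
  shows "s \<le> Fminus P n"
proof -
  define y where "y = (\<chi> j. \<Sum>i\<in>{1..n}. P i $ j :: real^'d)"
  have "P i $ j \<le> y $ j" if "i \<in> {1..n}" for i j
    unfolding y_def using that pos
    by (simp, intro member_le_sum) (auto intro: less_imp_le)
  moreover have "y \<in> orthant" unfolding orthant_def y_def
    using sum_nonneg[of "{1..n}" "\<lambda>i. P i $ _"] pos[THEN less_imp_le] by auto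
  ultimately have "y \<in> RS P n" by (auto simp: RS_def strict_below_def not_less)
  moreover have "\<And>j. P 1 $ j > 0" using pos n by simp
  ultimately obtain z where z: "z \<in> frontierRS P n"
    using frontier_point_below[OF n] by blast
  show ?thesis unfolding Fminus_eq
  proof (rule cInf_greatest)
    show "vsum ` frontierRS P n \<noteq> {}" using z by blast
  next
    fix v assume "v \<in> vsum ` frontierRS P n"
    then obtain x where x: "x \<in> frontierRS P n" "v = vsum x" by blast
    then have "x \<in> RS P n" using frontierRS_sub by blast
    then have "x \<in> orthant" "\<forall>i\<in>{1..n}. \<not> strict_below x (P i)" by (auto simp: RS_def)
    then show "s \<le> v" using cov x(2) by force
  qed
qed


definition grid :: "real \<Rightarrow> (real^'d) set" where
  "grid s = {g. (\<exists>f\<in>PiE UNIV (\<lambda>_. {0..nat \<lceil>s\<rceil>}). g = (\<chi> j. real (f j))) \<and> vsum g \<le> s + CARD('d)}"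

lemma grid_sub: "grid s \<subseteq> (\<lambda>f. (\<chi> j. real (f j))) ` PiE UNIV (\<lambda>_. {0..nat \<lceil>s\<rceil>})"
  by (auto simp: grid_def)

lemma grid_finite: "finite (grid s)"
  by (rule finite_subset[OF grid_sub]) (auto intro!: finite_PiE)

lemma grid_card: assumes "s \<ge> 0" shows "real (card (grid s :: (real^'d) set)) \<le> (s + 2) ^ CARD('d)"
proof -
  have "card (grid s :: (real^'d) set) \<le> card ((\<lambda>f. (\<chi> j. real (f j)) :: real^'d) ` PiE (UNIV::'d set) (\<lambda>_. {0..nat \<lceil>s\<rceil>}))"
    by (intro card_mono grid_sub) (auto intro!: finite_PiE)
  also have "\<dots> \<le> card (PiE (UNIV::'d set) (\<lambda>_. {0..nat \<lceil>s\<rceil>}))" by (rule card_image_le) (auto intro!: finite_PiE)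
  also have "\<dots> = (nat \<lceil>s\<rceil> + 1) ^ CARD('d)" by (simp add: card_PiE)
  finally have "real (card (grid s :: (real^'d) set)) \<le> real ((nat \<lceil>s\<rceil> + 1) ^ CARD('d))" by linarith
  also have "\<dots> = (real (nat \<lceil>s\<rceil>) + 1) ^ CARD('d)" by (simp add: add.commute)
  also have "\<dots> \<le> (s + 2) ^ CARD('d)"
    using assms by (intro power_mono) (auto, linarith)
  finally show ?thesis .
qed

lemma grid_orthant: "grid s \<subseteq> orthant"
  by (auto simp: grid_def orthant_def)

lemma grid_cover:
  fixes x :: "real^'d"
  assumes s: "s \<ge> 0" and x: "x \<in> orthant" "vsum x \<le> s"
  shows "\<exists>g\<in>grid s. \<forall>j. x $ j \<le> g $ j"
proof -
  define f where "f j = (if j \<in> (UNIV::'d set) then nat \<lceil>x $ j\<rceil> else undefined)" for j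
  define g where "g = (\<chi> j. real (f j) :: real^'d)"
  have xj: "x $ j \<le> s" for j
  proof -
    have "x $ j \<le> vsum x" unfolding vsum_def using x(1)
      by (intro member_le_sum) (auto simp: orthant_def)
    then show ?thesis using x(2) by simp
  qed
  have x0: "0 \<le> x $ j" for j using x(1) by (auto simp: orthant_def)
  have sn: "s \<le> real (nat \<lceil>s\<rceil>)" using s by (smt (verit) le_of_int_ceiling of_nat_nat ceiling_mono ceiling_zero)
  have fj: "nat \<lceil>x $ j\<rceil> \<le> nat \<lceil>s\<rceil>" for j using xj[of j] by (intro nat_mono ceiling_mono)
  have fP: "f \<in> PiE UNIV (\<lambda>_. {0..nat \<lceil>s\<rceil>})"
    using fj by (simp add: f_def PiE_def Pi_iff)
  have gj: "x $ j \<le> g $ j" "g $ j \<le> x $ j + 1" for j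
    using x0[of j] by (auto simp: g_def f_def)
  have "vsum g \<le> (\<Sum>j\<in>UNIV. x $ j + 1)" unfolding vsum_def by (intro sum_mono gj)
  also have "\<dots> = vsum x + CARD('d)" by (simp add: vsum_def sum.distrib)
  finally have "vsum g \<le> s + CARD('d)" using x(2) by simp
  then have "g \<in> grid s" using fP by (auto simp: grid_def g_def)
  then show ?thesis using gj by blast
qed

lemma Fminus_upper_axis:
  fixes P :: "nat \<Rightarrow> real^'d"
  assumes n: "n \<ge> 1" and pos: "\<And>j. P 1 $ j > 0" and a: "a \<ge> 0"
    and le: "\<And>i. i \<in> {1..n} \<Longrightarrow> P i $ j0 \<le> a"
  shows "Fminus P n \<le> a"
proof -
  define y where "y = (\<chi> j. if j = j0 then a else 0 :: real^'d)"
  have "y \<in> RS P n" using a le by (auto simp: RS_def y_def orthant_def strict_below_def not_less intro!: exI[of _ j0])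
  moreover have "vsum y = a" by (simp add: vsum_def y_def)
  ultimately show ?thesis using Fminus_upper[of n P y] n pos by simp
qed

lemma Fminus_lower_grid:
  fixes P :: "nat \<Rightarrow> real^'d"
  assumes n: "n \<ge> 1" and pos: "\<And>i j. i \<in> {1..n} \<Longrightarrow> P i $ j > 0" and s: "s \<ge> 0"
    and cov: "\<And>g. g \<in> grid s \<Longrightarrow> \<exists>i\<in>{1..n}. strict_below g (P i)"
  shows "s \<le> Fminus P n"
proof (rule Fminus_lower[OF n pos])
  fix x :: "real^'d" assume "x \<in> orthant" "vsum x \<le> s"
  then obtain g where g: "g \<in> grid s" "\<forall>j. x $ j \<le> g $ j" using grid_cover[OF s] by blast
  then obtain i where "i \<in> {1..n}" "strict_below g (P i)" using cov by blast
  moreover have "strict_below x (P i)" using g(2) \<open>strict_below g (P i)\<close>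
    unfolding strict_below_def by (meson le_less_trans)
  ultimately show "\<exists>i\<in>{1..n}. strict_below x (P i)" by blast
qed auto


locale expsetup = prob_space M for M :: "'a measure" +
  fixes X :: "nat \<Rightarrow> 'a \<Rightarrow> real^'d"
  assumes indep: "indep_vars (\<lambda>_. borel) (\<lambda>(i, j) \<omega>. X i \<omega> $ j) ({1..} \<times> UNIV)"
    and distr: "\<And>i j. i \<ge> 1 \<Longrightarrow>
           distributed M lborel (\<lambda>\<omega>. X i \<omega> $ j) (\<lambda>x. ennreal (exponential_density 1 x))"
begin

lemma Xmeas[measurable]: "i \<ge> 1 \<Longrightarrow> (\<lambda>\<omega>. X i \<omega> $ j) \<in> borel_measurable M"
  using distributed_measurable[OF distr] by (simp add: measurable_lborel1 cong: measurable_cong_sets)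

lemma ev_gt: "i \<ge> 1 \<Longrightarrow> {\<omega>\<in>space M. c < X i \<omega> $ j} \<in> events"
  by measurable

lemma prob_gt: assumes "i \<ge> 1" shows "prob {\<omega>\<in>space M. c < X i \<omega> $ j} = exp (- max 0 c)"
proof (cases "c \<ge> 0")
  case True
  show ?thesis using exponential_distributedD_gt[OF distr[OF assms], of c] True by simp
next
  case False
  have "prob {\<omega>\<in>space M. 0 < X i \<omega> $ j} \<le> prob {\<omega>\<in>space M. c < X i \<omega> $ j}"
    using False ev_gt[OF assms] by (intro finite_measure_mono) auto
  moreover have "prob {\<omega>\<in>space M. 0 < X i \<omega> $ j} = 1"
    using exponential_distributedD_gt[OF distr[OF assms], of 0] by simp
  ultimately have "prob {\<omega>\<in>space M. c < X i \<omega> $ j} = 1" using prob_le_1 by (simp add: antisym)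
  then show ?thesis using False by simp
qed

lemma AE_pos: "AE \<omega> in M. \<forall>i. \<forall>j. i \<ge> 1 \<longrightarrow> 0 < X i \<omega> $ j"
proof -
  have "AE \<omega> in M. 0 < X i \<omega> $ j" if "i \<ge> 1" for i j
  proof -
    have "prob {\<omega>\<in>space M. 0 < X i \<omega> $ j} = 1"
      using prob_gt[OF that, of 0] by simp
    then show ?thesis using prob_Collect_eq_1[of "\<lambda>\<omega>. 0 < X i \<omega> $ j"] ev_gt[OF that, of 0 j] by simp
  qed
  then show ?thesis by (auto simp: AE_all_countable)
qed

definition E :: "nat \<times> 'd \<Rightarrow> 'a set set" where
  "E p = {(\<lambda>(i, j) \<omega>. X i \<omega> $ j) p -` A \<inter> space M | A. A \<in> sets borel}"

lemma indepE: "indep_sets E ({1..} \<times> UNIV)"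
  using indep unfolding indep_vars_def2 E_def by simp

lemma gt_in_E: "{\<omega>\<in>space M. c < X i \<omega> $ j} \<in> E (i, j)"
  unfolding E_def by (auto intro!: exI[of _ "{c<..}"])

lemma prob_inter_pairs:
  assumes F: "finite F" "F \<noteq> {}" "F \<subseteq> {1..} \<times> UNIV"
  shows "prob (\<Inter>p\<in>F. {\<omega>\<in>space M. c p < X (fst p) \<omega> $ snd p})
       = (\<Prod>p\<in>F. exp (- max 0 (c p)))"
proof -
  have "prob (\<Inter>p\<in>F. {\<omega>\<in>space M. c p < X (fst p) \<omega> $ snd p})
       = (\<Prod>p\<in>F. prob {\<omega>\<in>space M. c p < X (fst p) \<omega> $ snd p})"
  proof -
    have "\<forall>J\<subseteq>{1..} \<times> UNIV. J \<noteq> {} \<longrightarrow> finite J \<longrightarrow> (\<forall>A\<in>Pi J E. prob (\<Inter>j\<in>J. A j) = (\<Prod>j\<in>J. prob (A j)))"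
      using indepE unfolding indep_sets_def by blast
    then have "\<forall>A\<in>Pi F E. prob (\<Inter>j\<in>F. A j) = (\<Prod>j\<in>F. prob (A j))"
      using F by blast
    moreover have "(\<lambda>p. {\<omega>\<in>space M. c p < X (fst p) \<omega> $ snd p}) \<in> Pi F E"
      using gt_in_E by (auto simp: Pi_iff)
    ultimately show ?thesis by blast
  qed
  also have "\<dots> = (\<Prod>p\<in>F. exp (- max 0 (c p)))"
    using F(3) by (intro prod.cong refl prob_gt) auto
  finally show ?thesis .
qed

definition S :: "nat \<Rightarrow> 'a set set" where
  "S i = sigma_sets (space M) (\<Union>p\<in>{i} \<times> UNIV. E p)"

lemma indepS: "indep_sets S {1..}"
proof -
  have "indep_sets (\<lambda>i. sigma_sets (space M) (\<Union>p\<in>{i} \<times> UNIV. E p)) {1..}"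
  proof (rule indep_sets_collect_sigma)
    show "indep_sets E (\<Union>j\<in>{1..}. {j} \<times> UNIV)"
    proof -
      have "(\<Union>j\<in>{1..}. {j} \<times> (UNIV::'d set)) = {1..} \<times> UNIV" by auto
      then show ?thesis by (subst \<open>_ = _\<close>) (rule indepE)
    qed
    show "Int_stable (E p)" for p
    proof (unfold Int_stable_def, intro ballI)
      fix a b assume "a \<in> E p" "b \<in> E p"
      then obtain A B where AB: "a = (\<lambda>(i, j) \<omega>. X i \<omega> $ j) p -` A \<inter> space M" "A \<in> sets borel"
        "b = (\<lambda>(i, j) \<omega>. X i \<omega> $ j) p -` B \<inter> space M" "B \<in> sets borel"
        unfolding E_def by blast
      then have "a \<inter> b = (\<lambda>(i, j) \<omega>. X i \<omega> $ j) p -` (A \<inter> B) \<inter> space M" "A \<inter> B \<in> sets borel"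
        by auto
      then show "a \<inter> b \<in> E p" unfolding E_def by blast
    qed
    show "disjoint_family_on (\<lambda>i. {i} \<times> (UNIV::'d set)) {1..}"
      by (auto simp: disjoint_family_on_def)
  qed
  then show ?thesis unfolding S_def[abs_def] .
qed

lemma S_sa: "sigma_algebra (space M) (S i)"
  unfolding S_def E_def by (intro sigma_algebra_sigma_sets) auto

definition Cov :: "nat \<Rightarrow> real^'d \<Rightarrow> 'a set" where
  "Cov i y = {\<omega>\<in>space M. strict_below y (X i \<omega>)}"

lemma Cov_eq: "Cov i y = (\<Inter>j. {\<omega>\<in>space M. y $ j < X i \<omega> $ j})"
  by (auto simp: Cov_def strict_below_def)

lemma Cov_S: "Cov i y \<in> S i"
proof -
  interpret sigma_algebra "space M" "S i" by (rule S_sa)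
  have "{\<omega>\<in>space M. y $ j < X i \<omega> $ j} \<in> S i" for j
    unfolding S_def using gt_in_E by (intro sigma_sets.Basic) blast
  then show ?thesis unfolding Cov_eq by (intro finite_INT) auto
qed

lemma nCov_S: "space M - Cov i y \<in> S i"
proof -
  interpret sigma_algebra "space M" "S i" by (rule S_sa)
  show ?thesis using Cov_S by (intro compl_sets)
qed

lemma Cov_ev: "i \<ge> 1 \<Longrightarrow> Cov i y \<in> events"
  unfolding Cov_eq by (intro sets.finite_INT ev_gt) auto

lemma prob_Cov:
  assumes "i \<ge> 1" "y \<in> orthant"
  shows "prob (Cov i y) = exp (- vsum y)"
proof -
  have "Cov i y = (\<Inter>p\<in>{i} \<times> UNIV. {\<omega>\<in>space M. y $ snd p < X (fst p) \<omega> $ snd p})"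
    by (auto simp: Cov_eq)
  then have "prob (Cov i y) = (\<Prod>p\<in>{i} \<times> UNIV. exp (- max 0 (y $ snd p)))"
    using prob_inter_pairs[of "{i} \<times> UNIV" "\<lambda>p. y $ snd p"] assms by auto
  also have "\<dots> = (\<Prod>j\<in>UNIV. exp (- y $ j))"
  proof -
    have "{i} \<times> UNIV = Pair i ` (UNIV::'d set)" by auto
    then show ?thesis using assms(2) by (simp only:, subst prod.reindex) (auto simp: inj_on_def orthant_def)
  qed
  also have "\<dots> = exp (- vsum y)"
    by (simp add: vsum_def exp_sum[symmetric] sum_negf)
  finally show ?thesis .
qed

lemma indep_prod:
  assumes K: "finite K" "K \<noteq> {}" and w: "inj_on w K" "w ` K \<subseteq> {1..}"
    and B: "\<And>m. m \<in> K \<Longrightarrow> B m \<in> S (w m)"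
  shows "prob (\<Inter>m\<in>K. B m) = (\<Prod>m\<in>K. prob (B m))"
proof -
  define A where "A i = B (the_inv_into K w i)" for i
  have Aw: "A (w m) = B m" if "m \<in> K" for m
    using that w(1) by (simp add: A_def the_inv_into_f_f)
  have "A \<in> Pi (w ` K) S" using Aw B by auto
  then have "prob (\<Inter>i\<in>w ` K. A i) = (\<Prod>i\<in>w ` K. prob (A i))"
  proof -
    have "\<forall>J\<subseteq>{1..}. J \<noteq> {} \<longrightarrow> finite J \<longrightarrow> (\<forall>A\<in>Pi J S. prob (\<Inter>j\<in>J. A j) = (\<Prod>j\<in>J. prob (A j)))"
      using indepS unfolding indep_sets_def by blast
    moreover have "w ` K \<subseteq> {1..}" "w ` K \<noteq> {}" "finite (w ` K)" using K w by auto
    ultimately show ?thesis using \<open>A \<in> Pi (w ` K) S\<close> by blast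
  qed
  moreover have "(\<Inter>i\<in>w ` K. A i) = (\<Inter>m\<in>K. B m)" using Aw by auto
  moreover have "(\<Prod>i\<in>w ` K. prob (A i)) = (\<Prod>m\<in>K. prob (B m))"
    using w(1) Aw by (simp add: prod.reindex)
  ultimately show ?thesis by simp
qed


lemma prob_nocov:
  assumes N: "N \<ge> 1" and y: "y \<in> orthant"
  shows "prob (\<Inter>i\<in>{1..N}. space M - Cov i y) = (1 - exp (- vsum y)) ^ N"
proof -
  have "prob (\<Inter>i\<in>{1..N}. space M - Cov i y) = (\<Prod>i\<in>{1..N}. prob (space M - Cov i y))"
    using N by (intro indep_prod[where w=id]) (auto intro: nCov_S)
  also have "\<dots> = (\<Prod>i\<in>{1..N}. 1 - exp (- vsum y))"
    by (intro prod.cong refl) (auto simp: prob_compl Cov_ev prob_Cov y)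
  finally show ?thesis by simp
qed

definition Blow :: "nat \<Rightarrow> real \<Rightarrow> 'a set" where
  "Blow N s = (\<Union>g\<in>grid s. \<Inter>i\<in>{1..N}. space M - Cov i g)"

lemma Blow_ev: "N \<ge> 1 \<Longrightarrow> Blow N s \<in> events"
  unfolding Blow_def using grid_finite
  by (intro sets.finite_UN sets.finite_INT) (auto intro!: sets.Diff Cov_ev)

lemma one_minus_pow_le: "0 \<le> a \<Longrightarrow> a \<le> 1 \<Longrightarrow> (1 - a) ^ N \<le> exp (- (real N * a))"
proof -
  assume a: "0 \<le> a" "a \<le> 1"
  have "(1 - a) ^ N \<le> exp (- a) ^ N"
    using a by (intro power_mono) (auto simp: exp_ge_add_one_self[of "-a", simplified])
  also have "\<dots> = exp (- (real N * a))" by (simp add: exp_of_nat_mult[symmetric])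
  finally show ?thesis .
qed

lemma prob_Blow:
  assumes N: "N \<ge> 1" and s: "s \<ge> 0"
  shows "prob (Blow N s) \<le> (s + 2) ^ CARD('d) * exp (- (real N * exp (- (s + CARD('d)))))"
proof -
  have "prob (Blow N s) \<le> (\<Sum>g\<in>grid s. prob (\<Inter>i\<in>{1..N}. space M - Cov i g))"
    unfolding Blow_def using N
    by (intro finite_measure_subadditive_finite grid_finite) (auto intro!: sets.finite_INT sets.Diff Cov_ev)
  also have "\<dots> \<le> (\<Sum>g\<in>(grid s :: (real^'d) set). exp (- (real N * exp (- (s + CARD('d))))))"
  proof (rule sum_mono)
    fix g :: "real^'d" assume g: "g \<in> grid s"
    then have go: "g \<in> orthant" using grid_orthant by blast
    have gs: "vsum g \<le> s + CARD('d)" using g by (simp add: grid_def)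
    have "prob (\<Inter>i\<in>{1..N}. space M - Cov i g) = (1 - exp (- vsum g)) ^ N" by (rule prob_nocov[OF N go])
    also have "\<dots> \<le> (1 - exp (- (s + CARD('d)))) ^ N"
      using gs vsum_nonneg[OF go] by (intro power_mono) auto
    also have "\<dots> \<le> exp (- (real N * exp (- (s + CARD('d)))))"
      using s by (intro one_minus_pow_le) auto
    finally show "prob (\<Inter>i\<in>{1..N}. space M - Cov i g) \<le> exp (- (real N * exp (- (s + CARD('d)))))" .
  qed
  also have "\<dots> = real (card (grid s :: (real^'d) set)) * exp (- (real N * exp (- (s + CARD('d)))))"
    by simp
  also have "\<dots> \<le> (s + 2) ^ CARD('d) * exp (- (real N * exp (- (s + CARD('d)))))"
    by (intro mult_right_mono grid_card s) auto
  finally show ?thesis .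
qed

definition Bup :: "nat \<Rightarrow> 'd \<Rightarrow> real \<Rightarrow> 'a set" where
  "Bup N j0 a = (\<Union>i\<in>{1..N}. {\<omega>\<in>space M. a < X i \<omega> $ j0})"

lemma Bup_ev: "Bup N j0 a \<in> events"
  unfolding Bup_def by (intro sets.finite_UN ev_gt) auto

lemma prob_Bup: assumes "a \<ge> 0" shows "prob (Bup N j0 a) \<le> real N * exp (- a)"
proof -
  have "prob (Bup N j0 a) \<le> (\<Sum>i\<in>{1..N}. prob {\<omega>\<in>space M. a < X i \<omega> $ j0})"
    unfolding Bup_def by (intro finite_measure_subadditive_finite) (auto intro: ev_gt)
  also have "\<dots> = (\<Sum>i\<in>{1..N}. exp (- a))" using assms by (intro sum.cong refl) (auto simp: prob_gt)
  finally show ?thesis by simp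
qed

definition Pos :: "'a set" where
  "Pos = {\<omega>\<in>space M. \<forall>i. \<forall>j. i \<ge> 1 \<longrightarrow> 0 < X i \<omega> $ j}"

lemma Pos_ev: "Pos \<in> events"
proof -
  have "Pos = space M \<inter> (\<Inter>i\<in>{1..}. \<Inter>j. {\<omega>\<in>space M. 0 < X i \<omega> $ j})"
    by (auto simp: Pos_def)
  also have "\<dots> \<in> events"
    by (intro sets.Int sets.countable_INT sets.finite_INT) (auto intro: ev_gt)
  finally show ?thesis .
qed

lemma prob_nPos: "prob (space M - Pos) = 0"
proof -
  have "prob Pos = 1" using AE_pos prob_Collect_eq_1 Pos_ev unfolding Pos_def by simp
  then show ?thesis by (simp add: prob_compl Pos_ev)
qed

lemma lower_det:
  assumes "\<omega> \<in> Pos" "N \<ge> 1" "s \<ge> 0" "\<omega> \<notin> Blow N s"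
  shows "s \<le> Fminus (\<lambda>i. X i \<omega>) N"
proof (rule Fminus_lower_grid)
  show "\<And>i j. i \<in> {1..N} \<Longrightarrow> 0 < X i \<omega> $ j" using assms(1) by (auto simp: Pos_def)
  fix g :: "real^'d" assume "g \<in> grid s"
  then show "\<exists>i\<in>{1..N}. strict_below g (X i \<omega>)"
    using assms(1,2,4) by (auto simp: Blow_def Cov_def Pos_def)
qed (use assms in auto)

lemma upper_det:
  assumes "\<omega> \<in> Pos" "N \<ge> 1" "a \<ge> 0" "\<omega> \<notin> Bup N j0 a"
  shows "Fminus (\<lambda>i. X i \<omega>) N \<le> a"
proof (rule Fminus_upper_axis[where ?j0.0=j0])
  show "\<And>j. 0 < X 1 \<omega> $ j" using assms(1) by (auto simp: Pos_def)
  show "\<And>i. i \<in> {1..N} \<Longrightarrow> X i \<omega> $ j0 \<le> a" using assms by (auto simp: Bup_def Pos_def not_less)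
qed (use assms in auto)

end


lemma lim_lnpow:
  assumes "e > 0" shows "((\<lambda>n. ln (real n) powr (-e)) \<longlongrightarrow> 0) sequentially"
proof -
  have "((\<lambda>x::real. x powr (-e)) \<longlongrightarrow> 0) at_top" using assms by real_asymp
  then have "((\<lambda>x::real. ln x powr (-e)) \<longlongrightarrow> 0) at_top"
    by (rule filterlim_compose) (rule ln_at_top)
  then show ?thesis by (rule filterlim_compose) (rule filterlim_real_sequentially)
qed

lemma lim_lnpow2:
  assumes "e > 0" "c > 0"
  shows "((\<lambda>n. (ln (real n) + 2) powr d * exp (- c * ln (real n) powr e)) \<longlongrightarrow> 0) sequentially"
proof -
  have "((\<lambda>x::real. (x + 2) powr d * exp (- c * x powr e)) \<longlongrightarrow> 0) at_top" using assms by real_asymp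
  then have "((\<lambda>x::real. (ln x + 2) powr d * exp (- c * ln x powr e)) \<longlongrightarrow> 0) at_top"
    by (rule filterlim_compose) (rule ln_at_top)
  then show ?thesis by (rule filterlim_compose) (rule filterlim_real_sequentially)
qed

lemma ev_lnln_big:
  fixes e B :: real
  shows "eventually (\<lambda>n. ln (real n) - e * ln (ln (real n)) \<ge> B) sequentially"
proof -
  have "filterlim (\<lambda>x::real. x - e * ln x) at_top at_top" by real_asymp
  then have "filterlim (\<lambda>x::real. ln x - e * ln (ln x)) at_top at_top"
    by (rule filterlim_compose) (rule ln_at_top)
  then have "filterlim (\<lambda>n. ln (real n) - e * ln (ln (real n))) at_top sequentially"
    by (rule filterlim_compose) (rule filterlim_real_sequentially)
  then show ?thesis by (simp add: filterlim_at_top)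
qed

lemma ev_lnln_pos: "eventually (\<lambda>n. ln (ln (real n)) > 0) sequentially"
proof -
  have "filterlim (\<lambda>x::real. ln (ln x)) at_top at_top" by real_asymp
  then have "filterlim (\<lambda>n. ln (ln (real n))) at_top sequentially"
    by (rule filterlim_compose) (rule filterlim_real_sequentially)
  then show ?thesis by (simp add: filterlim_at_top_dense)
qed

context expsetup begin

lemma part_a:
  assumes e: "\<epsilon> > 0" and d: "\<delta> > 0"
  shows "\<forall>\<^sub>F n in sequentially. \<exists>A\<in>sets M.
            {\<omega>\<in>space M. \<bar>(Fminus (\<lambda>i. X i \<omega>) n - ln (real n)) / ln (ln (real n))\<bar> > \<epsilon>} \<subseteq> A
            \<and> measure M A < \<delta>"
proof -
  define D where "D = real CARD('d)"
  define f where "f n = ln (real n) powr (-\<epsilon>) + (ln (real n) + 2) powr D * exp (- exp (-D) * ln (real n) powr \<epsilon>)" for n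
  have "(f \<longlongrightarrow> 0 + 0) sequentially" unfolding f_def
    using e by (intro tendsto_add lim_lnpow lim_lnpow2) auto
  then have ev1: "eventually (\<lambda>n. f n < \<delta>) sequentially" using d by (simp add: order_tendstoD)
  have ev2: "eventually (\<lambda>n. n \<ge> 3) sequentially" by (rule eventually_ge_at_top)
  show ?thesis using ev1 ev2 ev_lnln_pos ev_lnln_big[of 0 \<epsilon>]
  proof eventually_elim
    case (elim n)
    define L where "L = ln (real n)"
    define LL where "LL = ln (ln (real n))"
    define a where "a = L + \<epsilon> * LL"
    define s where "s = L - \<epsilon> * LL"
    obtain j0 :: 'd where True by simp
    have n1: "n \<ge> 1" using elim by simp
    have LL0: "LL > 0" using elim by (simp add: LL_def)
    have L0: "L > 0" using elim by (simp add: L_def)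
    have s0: "s \<ge> 0" using elim(4) unfolding s_def L_def LL_def by linarith
    have a0: "a \<ge> 0" using L0 LL0 e by (simp add: a_def)
    define A where "A = (space M - Pos) \<union> Bup n j0 a \<union> Blow n s"
    have Aev: "A \<in> events" unfolding A_def using Pos_ev Bup_ev Blow_ev n1 by auto
    have sub: "{\<omega>\<in>space M. \<bar>(Fminus (\<lambda>i. X i \<omega>) n - ln (real n)) / ln (ln (real n))\<bar> > \<epsilon>} \<subseteq> A"
    proof (rule subsetI, rule ccontr)
      fix \<omega> assume w: "\<omega> \<in> {\<omega>\<in>space M. \<bar>(Fminus (\<lambda>i. X i \<omega>) n - ln (real n)) / ln (ln (real n))\<bar> > \<epsilon>}"
        and nA: "\<omega> \<notin> A"
      then have P: "\<omega> \<in> Pos" "\<omega> \<notin> Bup n j0 a" "\<omega> \<notin> Blow n s" by (auto simp: A_def)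
      have lo: "s \<le> Fminus (\<lambda>i. X i \<omega>) n" by (rule lower_det[OF P(1) n1 s0 P(3)])
      have up: "Fminus (\<lambda>i. X i \<omega>) n \<le> a" by (rule upper_det[OF P(1) n1 a0 P(2)])
      have "\<bar>Fminus (\<lambda>i. X i \<omega>) n - L\<bar> \<le> \<epsilon> * LL" using lo up by (simp add: a_def s_def abs_le_iff)
      then have "\<bar>(Fminus (\<lambda>i. X i \<omega>) n - L) / LL\<bar> \<le> \<epsilon>" using LL0
        by (simp add: abs_divide pos_divide_le_eq)
      then show False using w by (simp add: L_def LL_def)
    qed
    have "measure M A \<le> prob (space M - Pos) + prob (Bup n j0 a) + prob (Blow n s)"
      unfolding A_def using Pos_ev Bup_ev Blow_ev n1
      by (meson measure_Un_le sets.Diff sets.top order_trans add_right_mono sets.Un)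
    also have "\<dots> \<le> 0 + real n * exp (- a) + (s + 2) ^ CARD('d) * exp (- (real n * exp (- (s + CARD('d)))))"
      using prob_nPos prob_Bup[OF a0] prob_Blow[OF n1 s0] by (intro add_mono) auto
    also have "\<dots> \<le> f n"
    proof -
      have "real n * exp (- a) = exp (- \<epsilon> * LL)"
        using n1 by (simp add: a_def L_def exp_diff exp_add[symmetric] algebra_simps exp_minus field_simps)
      also have "\<dots> = ln (real n) powr (-\<epsilon>)" using L0 by (simp add: powr_def L_def LL_def)
      finally have t1: "real n * exp (- a) = ln (real n) powr (-\<epsilon>)" .
      have "(s + 2) ^ CARD('d) \<le> (L + 2) ^ CARD('d)"
        using s0 LL0 e by (intro power_mono) (auto simp: s_def)
      also have "\<dots> = (L + 2) powr D" using L0 by (simp add: D_def powr_realpow)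
      finally have t2: "(s + 2) ^ CARD('d) \<le> (ln (real n) + 2) powr D" by (simp add: L_def)
      have "real n * exp (- (s + CARD('d))) = exp (-D) * exp (\<epsilon> * LL)"
        using n1 by (simp add: s_def L_def D_def exp_diff exp_add exp_minus field_simps)
      also have "\<dots> = exp (-D) * ln (real n) powr \<epsilon>" using L0 by (simp add: powr_def L_def LL_def)
      finally have t3: "exp (- (real n * exp (- (s + CARD('d))))) = exp (- exp (-D) * ln (real n) powr \<epsilon>)"
        by simp
      show ?thesis unfolding f_def t1 t3 using t2 by (simp add: mult_right_mono)
    qed
    also have "\<dots> < \<delta>" using elim by simp
    finally show ?case using Aev sub by blast
  qed
qed

end


definition vmax :: "real^'d \<Rightarrow> real^'d \<Rightarrow> real^'d" where
  "vmax p q = (\<chi> j. max (p $ j) (q $ j))"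

context expsetup begin

lemma Cov_Int: "Cov i p \<inter> Cov i q = Cov i (vmax p q)"
  by (auto simp: Cov_def strict_below_def vmax_def)

lemma prob_allcov:
  fixes p :: "nat \<Rightarrow> real^'d" and Ms :: "nat set"
  assumes N: "N \<ge> 1" and Ms: "finite Ms" "Ms \<noteq> {}"
    and po: "\<And>m. m \<in> Ms \<Longrightarrow> p m \<in> orthant" and ps: "\<And>m. m \<in> Ms \<Longrightarrow> vsum (p m) = \<sigma>"
    and pp: "\<And>m m'. m \<in> Ms \<Longrightarrow> m' \<in> Ms \<Longrightarrow> m \<noteq> m' \<Longrightarrow> \<sigma> + h \<le> vsum (vmax (p m) (p m'))"
  shows "prob (\<Inter>m\<in>Ms. \<Union>i\<in>{1..N}. Cov i (p m))
       \<le> real N * real (card Ms) ^ 2 * exp (- (\<sigma> + h)) + real N ^ card Ms * exp (- \<sigma>) ^ card Ms"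
proof -
  define D where "D = (\<Union>i\<in>{1..N}. \<Union>m\<in>Ms. \<Union>m'\<in>Ms - {m}. Cov i (vmax (p m) (p m')))"
  define W where "W = {w \<in> PiE Ms (\<lambda>_. {1..N}). inj_on w Ms}"
  define G where "G = (\<Union>w\<in>W. \<Inter>m\<in>Ms. Cov (w m) (p m))"
  have finW: "finite W" unfolding W_def by (rule finite_subset[of _ "PiE Ms (\<lambda>_. {1..N})"]) (auto intro: finite_PiE Ms)
  have vmo: "vmax (p m) (p m') \<in> orthant" if "m \<in> Ms" for m m'
    using po[OF that] by (auto simp: orthant_def vmax_def max.coboundedI1)
  have sub: "(\<Inter>m\<in>Ms. \<Union>i\<in>{1..N}. Cov i (p m)) \<subseteq> D \<union> G"
  proof
    fix \<omega> assume w: "\<omega> \<in> (\<Inter>m\<in>Ms. \<Union>i\<in>{1..N}. Cov i (p m))"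
    define w where "w = restrict (\<lambda>m. SOME i. i \<in> {1..N} \<and> \<omega> \<in> Cov i (p m)) Ms"
    have wm: "w m \<in> {1..N} \<and> \<omega> \<in> Cov (w m) (p m)" if "m \<in> Ms" for m
    proof -
      have "\<exists>i. i \<in> {1..N} \<and> \<omega> \<in> Cov i (p m)" using w that by blast
      then show ?thesis unfolding w_def restrict_apply'[OF that] by (rule someI_ex)
    qed
    show "\<omega> \<in> D \<union> G"
    proof (cases "inj_on w Ms")
      case True
      then have "w \<in> W" using wm by (auto simp: W_def w_def PiE_def extensional_def)
      then show ?thesis using wm by (auto simp: G_def)
    next
      case False
      then obtain m m' where mm: "m \<in> Ms" "m' \<in> Ms" "m \<noteq> m'" "w m = w m'"
        by (auto simp: inj_on_def)
      then have "\<omega> \<in> Cov (w m) (vmax (p m) (p m'))" using wm[of m] wm[of m'] Cov_Int by auto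
      then show ?thesis using mm wm[of m] unfolding D_def by blast
    qed
  qed
  have Dev: "D \<in> events" unfolding D_def using Ms
    by (intro sets.finite_UN) (auto intro!: Cov_ev)
  have Gev: "G \<in> events" unfolding G_def using Ms finW W_def
    by (intro sets.finite_UN sets.finite_INT) (auto intro!: Cov_ev simp: PiE_def Pi_def)
  have "prob (\<Inter>m\<in>Ms. \<Union>i\<in>{1..N}. Cov i (p m)) \<le> prob (D \<union> G)"
    using sub Dev Gev by (intro finite_measure_mono) auto
  also have "\<dots> \<le> prob D + prob G" using Dev Gev by (rule measure_Un_le)
  also have "prob D \<le> real N * real (card Ms) ^ 2 * exp (- (\<sigma> + h))"
  proof -
    have "prob D \<le> (\<Sum>i\<in>{1..N}. prob (\<Union>m\<in>Ms. \<Union>m'\<in>Ms - {m}. Cov i (vmax (p m) (p m'))))"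
      unfolding D_def using Ms by (intro finite_measure_subadditive_finite) (auto intro!: sets.finite_UN Cov_ev)
    also have "\<dots> \<le> (\<Sum>i\<in>{1..N}. real (card Ms) ^ 2 * exp (- (\<sigma> + h)))"
    proof (rule sum_mono)
      fix i assume i: "i \<in> {1..N}"
      have "prob (\<Union>m\<in>Ms. \<Union>m'\<in>Ms - {m}. Cov i (vmax (p m) (p m')))
          \<le> (\<Sum>m\<in>Ms. prob (\<Union>m'\<in>Ms - {m}. Cov i (vmax (p m) (p m'))))"
        using Ms i by (intro finite_measure_subadditive_finite) (auto intro!: sets.finite_UN Cov_ev)
      also have "\<dots> \<le> (\<Sum>m\<in>Ms. real (card Ms) * exp (- (\<sigma> + h)))"
      proof (rule sum_mono)
        fix m assume m: "m \<in> Ms"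
        have "prob (\<Union>m'\<in>Ms - {m}. Cov i (vmax (p m) (p m'))) \<le> (\<Sum>m'\<in>Ms - {m}. prob (Cov i (vmax (p m) (p m'))))"
          using Ms i by (intro finite_measure_subadditive_finite) (auto intro!: Cov_ev)
        also have "\<dots> \<le> (\<Sum>m'\<in>Ms - {m}. exp (- (\<sigma> + h)))"
        proof (rule sum_mono)
          fix m' assume m': "m' \<in> Ms - {m}"
          have "prob (Cov i (vmax (p m) (p m'))) = exp (- vsum (vmax (p m) (p m')))"
            using i vmo[OF m] by (intro prob_Cov) auto
          also have "\<dots> \<le> exp (- (\<sigma> + h))" using pp[of m m'] m m' by auto
          finally show "prob (Cov i (vmax (p m) (p m'))) \<le> exp (- (\<sigma> + h))" .
        qed
        also have "\<dots> = real (card (Ms - {m})) * exp (- (\<sigma> + h))" by simp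
        also have "\<dots> \<le> real (card Ms) * exp (- (\<sigma> + h))"
          using Ms by (intro mult_right_mono) (auto intro: card_mono)
        finally show "prob (\<Union>m'\<in>Ms - {m}. Cov i (vmax (p m) (p m'))) \<le> real (card Ms) * exp (- (\<sigma> + h))" .
      qed
      also have "\<dots> = real (card Ms) ^ 2 * exp (- (\<sigma> + h))" by (simp add: power2_eq_square)
      finally show "prob (\<Union>m\<in>Ms. \<Union>m'\<in>Ms - {m}. Cov i (vmax (p m) (p m'))) \<le> real (card Ms) ^ 2 * exp (- (\<sigma> + h))" .
    qed
    also have "\<dots> = real N * real (card Ms) ^ 2 * exp (- (\<sigma> + h))" by simp
    finally show ?thesis .
  qed
  also have "prob G \<le> real N ^ card Ms * exp (- \<sigma>) ^ card Ms"
  proof -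
    have "prob G \<le> (\<Sum>w\<in>W. prob (\<Inter>m\<in>Ms. Cov (w m) (p m)))"
      unfolding G_def using Ms finW
      by (intro finite_measure_subadditive_finite) (auto intro!: sets.finite_INT Cov_ev simp: W_def PiE_def Pi_def)
    also have "\<dots> = (\<Sum>w\<in>W. exp (- \<sigma>) ^ card Ms)"
    proof (rule sum.cong[OF refl])
      fix w assume w: "w \<in> W"
      have "prob (\<Inter>m\<in>Ms. Cov (w m) (p m)) = (\<Prod>m\<in>Ms. prob (Cov (w m) (p m)))"
        using w Ms by (intro indep_prod) (auto simp: W_def PiE_def Pi_def Cov_S)
      also have "\<dots> = (\<Prod>m\<in>Ms. exp (- \<sigma>))"
        using w po ps by (intro prod.cong refl) (auto simp: W_def PiE_def Pi_def prob_Cov)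
      finally show "prob (\<Inter>m\<in>Ms. Cov (w m) (p m)) = exp (- \<sigma>) ^ card Ms" by simp
    qed
    also have "\<dots> = real (card W) * exp (- \<sigma>) ^ card Ms" by simp
    also have "\<dots> \<le> real (card (PiE Ms (\<lambda>_. {1..N}))) * exp (- \<sigma>) ^ card Ms"
      by (intro mult_right_mono) (auto simp: W_def intro!: card_mono finite_PiE Ms)
    also have "\<dots> = real N ^ card Ms * exp (- \<sigma>) ^ card Ms" by (simp add: card_PiE Ms)
    finally show ?thesis .
  qed
  finally show ?thesis by simp
qed

end


lemma ln2_ge_half: "1/2 \<le> (ln 2 :: real)"
proof -
  have "1 = ln (exp (1::real))" by simp
  also have "\<dots> \<le> ln 4" using exp_le by (subst ln_le_cancel_iff) auto
  also have "(4::real) = 2 * 2" by simp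
  also have "ln (2 * 2 :: real) = 2 * ln 2" by (subst ln_mult) auto
  finally show ?thesis by simp
qed

lemma klog_ge1: "k \<ge> 2 \<Longrightarrow> 1 \<le> real k * ln 2"
proof -
  assume "k \<ge> 2"
  then have "2 * (1/2) \<le> real k * ln 2" using ln2_ge_half by (intro mult_mono) auto
  then show ?thesis by simp
qed

lemma block_eventually:
  assumes ev: "eventually B sequentially"
    and imp: "\<And>k n. B k \<Longrightarrow> 2 ^ k \<le> n \<Longrightarrow> n < 2 ^ Suc k \<Longrightarrow> R n"
  shows "eventually R sequentially"
proof -
  obtain K where K: "\<And>k. k \<ge> K \<Longrightarrow> B k" using ev by (auto simp: eventually_sequentially)
  have "R n" if n: "n \<ge> 2 ^ K" for n
  proof -
    have "n \<ge> 1" using n by (metis le_trans one_le_numeral one_le_power)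
    then obtain k where k: "2 ^ k \<le> n" "n < 2 ^ (k + 1)" using ex_power_ivl1[of 2 n] by auto
    have "k \<ge> K"
    proof (rule ccontr)
      assume "\<not> K \<le> k"
      then have "2 ^ (k + 1) \<le> (2::nat) ^ K" by (intro power_increasing) auto
      then show False using k n by linarith
    qed
    then show ?thesis using imp[OF K k(1)] k(2) by simp
  qed
  then show ?thesis by (auto simp: eventually_sequentially)
qed

lemma ln_bounds_block:
  assumes k: "k \<ge> 2" and n: "2 ^ k \<le> n" "n < 2 ^ Suc k"
  shows "real k * ln 2 \<le> ln (real n)" "ln (real n) < real (Suc k) * ln 2"
    "ln (real k * ln 2) \<le> ln (ln (real n))"
proof -
  have n0: "real n > 0" using n by (metis gr0I not_less0 of_nat_0_less_iff power_eq_0_iff le_0_eq zero_neq_numeral)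
  have "(2::real) ^ k \<le> real n" using n(1) by (metis of_nat_le_iff of_nat_numeral of_nat_power)
  then have "ln ((2::real) ^ k) \<le> ln (real n)" using n0 by (subst ln_le_cancel_iff) auto
  then show a: "real k * ln 2 \<le> ln (real n)" by (simp add: ln_realpow)
  have "real n < (2::real) ^ Suc k" using n(2) by (metis of_nat_less_iff of_nat_numeral of_nat_power)
  then have "ln (real n) < ln ((2::real) ^ Suc k)" using n0 by (subst ln_less_cancel_iff) auto
  then show "ln (real n) < real (Suc k) * ln 2" by (simp add: ln_realpow del: power_Suc)
  have "1 \<le> real k * ln 2" using klog_ge1[OF k] .
  then show "ln (real k * ln 2) \<le> ln (ln (real n))" using a by (subst ln_le_cancel_iff) auto
qed

context expsetup begin

lemma Pos_space: "\<omega> \<in> Pos \<Longrightarrow> \<omega> \<in> space M" by (simp add: Pos_def)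

lemma lower_det2:
  assumes "\<omega> \<in> Pos" "N \<ge> 1" "N \<le> n" "s \<ge> 0" "\<omega> \<notin> Blow N s"
  shows "s \<le> Fminus (\<lambda>i. X i \<omega>) n"
proof (rule Fminus_lower_grid)
  show "\<And>i j. i \<in> {1..n} \<Longrightarrow> 0 < X i \<omega> $ j" using assms(1) by (auto simp: Pos_def)
  fix g :: "real^'d" assume "g \<in> grid s"
  then obtain i where "i \<in> {1..N}" "strict_below g (X i \<omega>)"
    using assms(1,2,5) by (auto simp: Blow_def Cov_def Pos_def)
  then show "\<exists>i\<in>{1..n}. strict_below g (X i \<omega>)" using assms(3) by (intro bexI[of _ i]) auto
qed (use assms in auto)

lemma upper_det2:
  assumes "\<omega> \<in> Pos" "1 \<le> n" "n \<le> N" "y \<in> orthant" "\<omega> \<notin> (\<Union>i\<in>{1..N}. Cov i y)"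
  shows "Fminus (\<lambda>i. X i \<omega>) n \<le> vsum y"
proof (rule Fminus_upper)
  show "\<And>j. 0 < X 1 \<omega> $ j" using assms(1) by (auto simp: Pos_def)
  show "y \<in> RS (\<lambda>i. X i \<omega>) n" using assms by (auto simp: RS_def Cov_def Pos_def)
qed (use assms in auto)

lemma AE_Pos: "AE \<omega> in M. \<omega> \<in> Pos"
  using AE_pos by (auto simp: Pos_def)

end


lemma g_small:
  assumes "e > 0" "c > 0"
  shows "eventually (\<lambda>k. (real k + 3) powr D * exp (- c * real k powr e) \<le> inverse (real k ^ 2)) sequentially"
proof -
  have "(\<lambda>x::real. (x + 3) powr D * exp (- c * x powr e)) \<in> o(\<lambda>x. inverse (x ^ 2))" using assms by real_asymp
  then have "eventually (\<lambda>x::real. norm ((x + 3) powr D * exp (- c * x powr e)) \<le> 1 * norm (inverse (x ^ 2))) at_top"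
    by (rule landau_o.smallD) simp
  then have "eventually (\<lambda>x::real. (x + 3) powr D * exp (- c * x powr e) \<le> inverse (x ^ 2)) at_top"
    by eventually_elim auto
  then show ?thesis using filterlim_real_sequentially by (rule eventually_compose_filterlim)
qed

lemma ev_sL:
  assumes "e > 0"
  shows "eventually (\<lambda>k. 4 \<le> k \<and> 0 \<le> real (Suc k) * ln 2 - e * ln (real k * ln 2)) sequentially"
proof -
  have "filterlim (\<lambda>x::real. (x + 1) * ln 2 - e * ln (x * ln 2)) at_top at_top" by real_asymp
  then have "filterlim (\<lambda>k. (real k + 1) * ln 2 - e * ln (real k * ln 2)) at_top sequentially"
    by (rule filterlim_compose) (rule filterlim_real_sequentially)
  then have "eventually (\<lambda>k. 0 \<le> (real k + 1) * ln 2 - e * ln (real k * ln 2)) sequentially"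
    using filterlim_at_top[THEN iffD1, rule_format, of _ sequentially 0] by blast
  then show ?thesis using eventually_ge_at_top[of 4]
    by eventually_elim (simp add: algebra_simps)
qed

context expsetup begin

lemma AE_lower:
  assumes e: "\<epsilon> > 0"
  shows "AE \<omega> in M. eventually (\<lambda>n. ln (real n) - \<epsilon> * ln (ln (real n)) \<le> Fminus (\<lambda>i. X i \<omega>) n) sequentially"
proof -
  define D where "D = real CARD('d)"
  define c where "c = exp (-D) / 2 * ln 2 powr \<epsilon>"
  define sL where "sL k = real (Suc k) * ln 2 - \<epsilon> * ln (real k * ln 2)" for k
  define Lev where "Lev k = (if 4 \<le> k \<and> 0 \<le> sL k then Blow (2^k) (sL k) else {})" for k
  define g where "g k = (real k + 3) powr D * exp (- c * real k powr \<epsilon>)" for k :: nat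
  have c0: "c > 0" by (simp add: c_def)
  have Lev_ev: "Lev k \<in> events" for k by (simp add: Lev_def Blow_ev)
  have bound: "prob (Lev k) \<le> g k" if k: "4 \<le> k" "0 \<le> sL k" for k
  proof -
    have kl: "1 \<le> real k * ln 2" using klog_ge1[of k] k by simp
    have lnkl: "0 \<le> ln (real k * ln 2)" using kl by simp
    have "prob (Lev k) = prob (Blow (2^k) (sL k))" using k by (simp add: Lev_def)
    also have "\<dots> \<le> (sL k + 2) ^ CARD('d) * exp (- (real (2^k) * exp (- (sL k + CARD('d)))))"
      using k by (intro prob_Blow) auto
    also have "\<dots> \<le> g k"
    proof -
      have "sL k \<le> real k + 1"
      proof -
        have "real (Suc k) * ln 2 \<le> real (Suc k) * 1" using ln_2_less_1 by (intro mult_left_mono) auto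
        then have a: "real (Suc k) * ln 2 \<le> real k + 1" by (simp only: mult_1_right of_nat_Suc)
        moreover have "0 \<le> \<epsilon> * ln (real k * ln 2)" using lnkl e by simp
        then show ?thesis using a unfolding sL_def by linarith
      qed
      then have "(sL k + 2) ^ CARD('d) \<le> (real k + 3) ^ CARD('d)" using k by (intro power_mono) auto
      also have "\<dots> = (real k + 3) powr D" by (simp add: D_def powr_realpow)
      finally have t1: "(sL k + 2) ^ CARD('d) \<le> (real k + 3) powr D" .
      have ek: "exp (real (Suc k) * ln 2) = 2 ^ Suc k" by (simp only: exp_of_nat_mult) simp
      have ep: "exp (\<epsilon> * ln (real k * ln 2)) = real k powr \<epsilon> * ln 2 powr \<epsilon>"
      proof -
        have "exp (\<epsilon> * ln (real k * ln 2)) = (real k * ln 2) powr \<epsilon>" using kl k by (auto simp: powr_def mult.commute)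
        also have "\<dots> = real k powr \<epsilon> * ln 2 powr \<epsilon>" using powr_mult[of "real k" "ln 2" \<epsilon>] by simp
        finally show ?thesis .
      qed
      have "real (2^k) * exp (- (sL k + CARD('d))) = 2 ^ k * exp (\<epsilon> * ln (real k * ln 2)) * exp (-D) / exp (real (Suc k) * ln 2)"
        by (simp add: sL_def D_def exp_diff exp_add exp_minus field_simps)
      also have "\<dots> = c * real k powr \<epsilon>" unfolding ek ep c_def by (simp add: field_simps)
      finally have t2: "exp (- (real (2^k) * exp (- (sL k + CARD('d))))) = exp (- c * real k powr \<epsilon>)" by simp
      show ?thesis unfolding t2 g_def using t1 by (intro mult_right_mono) auto
    qed
    finally show ?thesis .
  qed
  have summ: "summable (\<lambda>k. prob (Lev k))"
  proof (rule summable_comparison_test_ev)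
    show "eventually (\<lambda>k. norm (prob (Lev k)) \<le> inverse (real k ^ 2)) sequentially"
      using g_small[OF e c0, of D] ev_sL[OF e]
    proof eventually_elim
      case (elim k)
      then have "prob (Lev k) \<le> g k" using bound by (simp add: sL_def)
      then show ?case using elim by (simp add: g_def)
    qed
    show "summable (\<lambda>k. inverse (real k ^ 2))" by (rule inverse_power_summable) simp
  qed
  have "AE \<omega> in M. eventually (\<lambda>k. \<omega> \<in> space M - Lev k) sequentially"
    using Lev_ev summ by (intro borel_cantelli_AE1) (auto simp: emeasure_eq_measure)
  then show ?thesis using AE_Pos
  proof eventually_elim
    case (elim \<omega>)
    have "eventually (\<lambda>k. \<omega> \<notin> Lev k \<and> 4 \<le> k \<and> 0 \<le> sL k) sequentially"
      using elim(1) ev_sL[OF e] by eventually_elim (auto simp: sL_def)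
    then show ?case
    proof (rule block_eventually)
      fix k n :: nat assume B: "\<omega> \<notin> Lev k \<and> 4 \<le> k \<and> 0 \<le> sL k" and n: "2 ^ k \<le> n" "n < 2 ^ Suc k"
      have k2: "k \<ge> 2" using B by simp
      note lb = ln_bounds_block[OF k2 n]
      have "sL k \<le> Fminus (\<lambda>i. X i \<omega>) n"
        using B n elim(2) by (intro lower_det2[where N="2^k"]) (auto simp: Lev_def)
      moreover have "ln (real n) - \<epsilon> * ln (ln (real n)) \<le> sL k"
      proof -
        have "\<epsilon> * ln (real k * ln 2) \<le> \<epsilon> * ln (ln (real n))" using lb(3) e by (intro mult_left_mono) auto
        then show ?thesis using lb(2) unfolding sL_def by linarith
      qed
      ultimately show "ln (real n) - \<epsilon> * ln (ln (real n)) \<le> Fminus (\<lambda>i. X i \<omega>) n" by linarith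
    qed
  qed
qed

end


lemma vsum2:
  fixes j1 j2 :: "'d::finite"
  assumes "j1 \<noteq> j2"
  shows "vsum (\<chi> j. if j = j1 then a else if j = j2 then b else 0 :: real^'d) = a + b"
proof -
  have "(\<Sum>j\<in>UNIV. (if j = j1 then a else if j = j2 then b else 0)) =
        (\<Sum>j\<in>UNIV. (if j = j1 then a else 0) + (if j = j2 then b else 0))"
    using assms by (intro sum.cong) auto
  also have "\<dots> = a + b" by (simp add: sum.distrib)
  finally show ?thesis by (simp add: vsum_def)
qed

lemma ev_lnk:
  assumes "e > 0"
  shows "eventually (\<lambda>k. 4 \<le> k \<and> ln 2 \<le> e / 2 * ln (real k * ln 2)) sequentially"
proof -
  have "filterlim (\<lambda>x::real. e / 2 * ln (x * ln 2)) at_top at_top" using assms by real_asymp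
  then have "filterlim (\<lambda>k. e / 2 * ln (real k * ln 2)) at_top sequentially"
    by (rule filterlim_compose) (rule filterlim_real_sequentially)
  then have "eventually (\<lambda>k. ln 2 \<le> e / 2 * ln (real k * ln 2)) sequentially"
    using filterlim_at_top[THEN iffD1, rule_format, of _ sequentially "ln 2"] by blast
  then show ?thesis using eventually_ge_at_top[of 4] by eventually_elim simp
qed

context expsetup begin

lemma AE_upper:
  assumes e: "\<epsilon> > 0" and j: "(j1::'d) \<noteq> j2"
  shows "AE \<omega> in M. eventually (\<lambda>n. Fminus (\<lambda>i. X i \<omega>) n \<le> ln (real n) + \<epsilon> * ln (ln (real n))) sequentially"
proof -
  define K where "K = nat \<lceil>4 / \<epsilon>\<rceil>"
  have KK: "2 \<le> \<epsilon> / 2 * real (Suc K)"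
  proof -
    have "4 / \<epsilon> \<le> real K" unfolding K_def by linarith
    then have "\<epsilon> * (4 / \<epsilon>) \<le> \<epsilon> * real K" using e by (intro mult_left_mono) auto
    then have "4 \<le> \<epsilon> * real K" using e by simp
    then show ?thesis using e by (simp add: algebra_simps)
  qed
  define \<sigma> where "\<sigma> k = real (Suc k) * ln 2 + \<epsilon> / 2 * ln (real k * ln 2)" for k
  define h where "h k = \<sigma> k / real (Suc K)" for k
  define p where "p k m = (\<chi> j. if j = j1 then real m * h k else if j = j2 then \<sigma> k - real m * h k else 0 :: real^'d)" for k m
  define U where "U k = (if 4 \<le> k then (\<Inter>m\<in>{0..K}. \<Union>i\<in>{1..2 ^ Suc k}. Cov i (p k m)) else {})" for k
  define q where "q = exp (- ln 2 / real (Suc K))"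
  define bnd where "bnd k = real (Suc K) ^ 2 * q ^ k + inverse (ln 2 ^ 2) * inverse (real k ^ 2)" for k
  have Uev: "U k \<in> events" for k
    by (auto simp: U_def intro!: sets.finite_INT sets.finite_UN Cov_ev)
  have bound: "prob (U k) \<le> bnd k" if k: "4 \<le> k" for k
  proof -
    have kl: "1 \<le> real k * ln 2" using klog_ge1[of k] k by simp
    have lnkl: "0 \<le> ln (real k * ln 2)" using kl by simp
    have \<sigma>ge: "real (Suc k) * ln 2 \<le> \<sigma> k" using lnkl e by (simp add: \<sigma>_def)
    have \<sigma>0: "0 \<le> \<sigma> k" using \<sigma>ge by (smt (verit) ln_gt_zero mult_nonneg_nonneg of_nat_0_le_iff)
    have h0: "0 \<le> h k" using \<sigma>0 by (simp add: h_def)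
    have hK: "real (Suc K) * h k = \<sigma> k" by (simp add: h_def)
    have po: "p k m \<in> orthant" if "m \<in> {0..K}" for m
    proof -
      have "real m * h k \<le> real (Suc K) * h k" using that h0 by (intro mult_right_mono) auto
      then show ?thesis using h0 hK by (auto simp: orthant_def p_def)
    qed
    have ps: "vsum (p k m) = \<sigma> k" for m unfolding p_def using vsum2[OF j] by simp
    have pp: "\<sigma> k + h k \<le> vsum (vmax (p k m) (p k m'))" if "m \<noteq> m'" for m m'
    proof -
      have vm: "vmax (p k m) (p k m') = (\<chi> j. if j = j1 then max (real m * h k) (real m' * h k)
          else if j = j2 then max (\<sigma> k - real m * h k) (\<sigma> k - real m' * h k) else 0 :: real^'d)"
        by (auto simp: vmax_def p_def vec_eq_iff)
      have "\<sigma> k + h k \<le> max (real m * h k) (real m' * h k) + max (\<sigma> k - real m * h k) (\<sigma> k - real m' * h k)"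
      proof (cases "m < m'")
        case True
        then have "(real m + 1) * h k \<le> real m' * h k" using h0 by (intro mult_right_mono) auto
        then show ?thesis by (simp add: algebra_simps max_def)
      next
        case False
        then have "m' < m" using that by simp
        then have "(real m' + 1) * h k \<le> real m * h k" using h0 by (intro mult_right_mono) auto
        then show ?thesis using \<open>m' < m\<close> h0 by (auto simp: algebra_simps max_def)
      qed
      then show ?thesis unfolding vm using vsum2[OF j] by simp
    qed
    define t where "t = (real k * ln 2) powr (- (\<epsilon> / 2))"
    have t0a: "0 < t" using kl k by (simp add: t_def)
    have "1 \<le> (real k * ln 2) powr (\<epsilon> / 2)" using kl e by (intro ge_one_powr_ge_zero) auto
    then have "t \<le> 1" unfolding t_def powr_minus_divide by (simp add: divide_le_eq)
    note t0 = t0a this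
    have Nt: "real (2 ^ Suc k) * exp (- \<sigma> k) = t"
    proof -
      have ek: "exp (real (Suc k) * ln 2) = 2 ^ Suc k" by (simp only: exp_of_nat_mult) simp
      have "exp (- (\<epsilon> / 2) * ln (real k * ln 2)) = t" using kl k by (auto simp: t_def powr_def mult.commute)
      moreover have "exp (- \<sigma> k) = exp (- (\<epsilon> / 2) * ln (real k * ln 2)) / exp (real (Suc k) * ln 2)"
        unfolding \<sigma>_def by (subst exp_diff[symmetric], rule arg_cong[where f=exp]) (simp add: algebra_simps)
      ultimately show ?thesis unfolding ek by simp
    qed
    have "prob (U k) = prob (\<Inter>m\<in>{0..K}. \<Union>i\<in>{1..2 ^ Suc k}. Cov i (p k m))" using k by (simp add: U_def)
    also have "\<dots> \<le> real (2 ^ Suc k) * real (card {0..K}) ^ 2 * exp (- (\<sigma> k + h k))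
        + real (2 ^ Suc k) ^ card {0..K} * exp (- \<sigma> k) ^ card {0..K}"
      using po ps pp by (intro prob_allcov) auto
    also have "\<dots> = real (Suc K) ^ 2 * t * exp (- h k) + t ^ Suc K"
    proof -
      have c: "card {0..K} = Suc K" by simp
      have e1: "exp (- (\<sigma> k + h k)) = exp (- \<sigma> k) * exp (- h k)" by (simp add: exp_add[symmetric])
      have a1: "real (2 ^ Suc k) ^ Suc K * exp (- \<sigma> k) ^ Suc K = t ^ Suc K"
        by (simp only: power_mult_distrib[symmetric] Nt)
      have a2: "real (2 ^ Suc k) * real (Suc K) ^ 2 * exp (- (\<sigma> k + h k)) = real (Suc K) ^ 2 * t * exp (- h k)"
        unfolding e1 Nt[symmetric] by (simp only: mult_ac)
      show ?thesis unfolding c a1 a2 ..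
    qed
    also have "\<dots> \<le> bnd k"
    proof -
      have "real (Suc K) ^ 2 * t * exp (- h k) \<le> real (Suc K) ^ 2 * 1 * exp (- h k)"
        using t0 by (intro mult_right_mono mult_left_mono) auto
      also have "exp (- h k) \<le> q ^ k"
      proof -
        have "real k * ln 2 \<le> \<sigma> k" using \<sigma>ge by (smt (verit) ln_gt_zero mult_right_mono of_nat_Suc)
        then have "real k * (ln 2 / real (Suc K)) \<le> h k" by (simp add: h_def divide_right_mono)
        then have "exp (- h k) \<le> exp (real k * (- ln 2 / real (Suc K)))" by simp
        also have "\<dots> = q ^ k" by (simp only: exp_of_nat_mult q_def)
        finally show ?thesis .
      qed
      then have "real (Suc K) ^ 2 * 1 * exp (- h k) \<le> real (Suc K) ^ 2 * q ^ k" by simp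
      also have "t ^ Suc K \<le> inverse (ln 2 ^ 2) * inverse (real k ^ 2)"
      proof -
        have "t ^ Suc K = (real k * ln 2) powr (real (Suc K) * (- (\<epsilon> / 2)))"
          unfolding t_def using kl k by (subst powr_power) auto
        also have "\<dots> \<le> (real k * ln 2) powr (- 2)"
          using KK kl by (intro powr_mono) (auto simp: algebra_simps)
        also have "\<dots> = inverse (ln 2 ^ 2) * inverse (real k ^ 2)"
          using kl by (simp add: powr_minus power_mult_distrib)
        finally show ?thesis .
      qed
      ultimately show ?thesis unfolding bnd_def by linarith
    qed
    finally show ?thesis .
  qed
  have summ: "summable (\<lambda>k. prob (U k))"
  proof (rule summable_comparison_test_ev)
    show "eventually (\<lambda>k. norm (prob (U k)) \<le> bnd k) sequentially"
      using eventually_ge_at_top[of 4] by eventually_elim (use bound in auto)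
    have q1: "norm q < 1" unfolding q_def by simp
    show "summable bnd" unfolding bnd_def
      by (intro summable_add summable_mult summable_geometric q1 summable_mult inverse_power_summable) auto
  qed
  have "AE \<omega> in M. eventually (\<lambda>k. \<omega> \<in> space M - U k) sequentially"
    using Uev summ by (intro borel_cantelli_AE1) (auto simp: emeasure_eq_measure)
  then show ?thesis using AE_Pos
  proof eventually_elim
    case (elim \<omega>)
    have "eventually (\<lambda>k. \<omega> \<notin> U k \<and> 4 \<le> k \<and> ln 2 \<le> \<epsilon> / 2 * ln (real k * ln 2)) sequentially"
      using elim(1) ev_lnk[OF e] by eventually_elim auto
    then show ?case
    proof (rule block_eventually)
      fix k n :: nat assume B: "\<omega> \<notin> U k \<and> 4 \<le> k \<and> ln 2 \<le> \<epsilon> / 2 * ln (real k * ln 2)"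
        and n: "2 ^ k \<le> n" "n < 2 ^ Suc k"
      have k2: "k \<ge> 2" using B by simp
      note lb = ln_bounds_block[OF k2 n]
      obtain m where m: "m \<in> {0..K}" "\<omega> \<notin> (\<Union>i\<in>{1..2 ^ Suc k}. Cov i (p k m))"
        using B by (auto simp: U_def)
      have kl: "1 \<le> real k * ln 2" using klog_ge1[OF k2] .
      have h0: "0 \<le> h k" using kl e by (simp add: h_def \<sigma>_def)
      have hK: "real (Suc K) * h k = \<sigma> k" by (simp add: h_def)
      have po: "p k m \<in> orthant"
      proof -
        have "real m * h k \<le> real (Suc K) * h k" using m h0 by (intro mult_right_mono) auto
        then show ?thesis using h0 hK by (auto simp: orthant_def p_def)
      qed
      have n1: "1 \<le> n" using n(1) by (metis le_trans one_le_numeral one_le_power)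
      have "Fminus (\<lambda>i. X i \<omega>) n \<le> vsum (p k m)"
        using elim(2) n1 n po m(2) by (intro upper_det2[where N="2 ^ Suc k"]) auto
      also have "vsum (p k m) = \<sigma> k" unfolding p_def using vsum2[OF j] by simp
      also have "\<sigma> k \<le> ln (real n) + \<epsilon> * ln (ln (real n))"
      proof -
        have "\<epsilon> * ln (real k * ln 2) \<le> \<epsilon> * ln (ln (real n))" using lb(3) e by (intro mult_left_mono) auto
        then show ?thesis using lb(1) B unfolding \<sigma>_def by (simp add: algebra_simps)
      qed
      finally show "Fminus (\<lambda>i. X i \<omega>) n \<le> ln (real n) + \<epsilon> * ln (ln (real n))" .
    qed
  qed
qed

end


theorem corollary1p10:
  fixes M :: "'a measure" and X :: "nat \<Rightarrow> 'a \<Rightarrow> real^'d"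
  assumes "prob_space M"
    and "prob_space.indep_vars M (\<lambda>_. borel) (\<lambda>(i, j) \<omega>. X i \<omega> $ j) ({1..} \<times> UNIV)"
    and "\<And>i j. i \<ge> 1 \<Longrightarrow>
           distributed M lborel (\<lambda>\<omega>. X i \<omega> $ j) (\<lambda>x. ennreal (exponential_density 1 x))"
  shows "(\<forall>\<epsilon>>0. \<forall>\<delta>>0. \<forall>\<^sub>F n in sequentially. \<exists>A\<in>sets M.
            {\<omega>\<in>space M. \<bar>(Fminus (\<lambda>i. X i \<omega>) n - ln (real n)) / ln (ln (real n))\<bar> > \<epsilon>} \<subseteq> A
            \<and> measure M A < \<delta>)
       \<and> (CARD('d) \<ge> 2 \<longrightarrow>
            (AE \<omega> in M. (\<lambda>n. (Fminus (\<lambda>i. X i \<omega>) n - ln (real n)) / ln (ln (real n)))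
                          \<longlonglongrightarrow> 0))"
proof -
  interpret expsetup M X
    by (intro expsetup.intro expsetup_axioms.intro assms)
  have A: "\<forall>\<epsilon>>0. \<forall>\<delta>>0. \<forall>\<^sub>F n in sequentially. \<exists>A\<in>sets M.
            {\<omega>\<in>space M. \<bar>(Fminus (\<lambda>i. X i \<omega>) n - ln (real n)) / ln (ln (real n))\<bar> > \<epsilon>} \<subseteq> A
            \<and> measure M A < \<delta>"
  proof (intro allI impI)
    fix \<epsilon> \<delta> :: real assume "\<epsilon> > 0" "\<delta> > 0"
    then show "\<forall>\<^sub>F n in sequentially. \<exists>A\<in>sets M.
            {\<omega>\<in>space M. \<bar>(Fminus (\<lambda>i. X i \<omega>) n - ln (real n)) / ln (ln (real n))\<bar> > \<epsilon>} \<subseteq> A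
            \<and> measure M A < \<delta>" by (rule part_a)
  qed
  have B: "AE \<omega> in M. (\<lambda>n. (Fminus (\<lambda>i. X i \<omega>) n - ln (real n)) / ln (ln (real n))) \<longlonglongrightarrow> 0"
    if card: "CARD('d) \<ge> 2"
  proof -
    have "\<exists>j1 j2::'d. j1 \<noteq> j2"
    proof (rule ccontr)
      assume "\<not> (\<exists>j1 j2::'d. j1 \<noteq> j2)"
      then have "(UNIV::'d set) = {undefined}" by auto
      then have "CARD('d) = card {undefined::'d}" by (simp only:)
      then have "CARD('d) = 1" by (simp only: card_1_singleton_iff) simp
      then show False using card by simp
    qed
    then obtain j1 j2 :: 'd where j: "j1 \<noteq> j2" by blast
    have "AE \<omega> in M. \<forall>r::nat. eventually (\<lambda>n. ln (real n) - inverse (real (Suc r)) * ln (ln (real n)) \<le> Fminus (\<lambda>i. X i \<omega>) n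
        \<and> Fminus (\<lambda>i. X i \<omega>) n \<le> ln (real n) + inverse (real (Suc r)) * ln (ln (real n))) sequentially"
    proof (subst AE_all_countable, intro allI)
      fix r :: nat
      have e: "inverse (real (Suc r)) > 0" by simp
      show "AE \<omega> in M. eventually (\<lambda>n. ln (real n) - inverse (real (Suc r)) * ln (ln (real n)) \<le> Fminus (\<lambda>i. X i \<omega>) n
        \<and> Fminus (\<lambda>i. X i \<omega>) n \<le> ln (real n) + inverse (real (Suc r)) * ln (ln (real n))) sequentially"
        using AE_lower[OF e] AE_upper[OF e j]
        by eventually_elim (rule eventually_conj)
    qed
    then show ?thesis
    proof eventually_elim
      case (elim \<omega>)
      show ?case
      proof (rule LIMSEQ_I)
        fix e :: real assume e: "e > 0"
        obtain n0 :: nat where n0: "n0 > 0" "inverse (real n0) < e" using ex_inverse_of_nat_less[OF e] by auto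
        define r where "r = n0 - 1"
        have "Suc r = n0" using n0 by (simp add: r_def)
        then have r: "inverse (real (Suc r)) < e" using n0 by simp
        show "\<exists>no. \<forall>n\<ge>no. norm ((Fminus (\<lambda>i. X i \<omega>) n - ln (real n)) / ln (ln (real n)) - 0) < e"
        proof -
          have "eventually (\<lambda>n. norm ((Fminus (\<lambda>i. X i \<omega>) n - ln (real n)) / ln (ln (real n)) - 0) < e) sequentially"
            using elim[rule_format, of r] ev_lnln_pos
          proof eventually_elim
            case (elim n)
            define LL where "LL = ln (ln (real n))"
            have LL0: "LL > 0" using elim by (simp add: LL_def)
            have "\<bar>Fminus (\<lambda>i. X i \<omega>) n - ln (real n)\<bar> \<le> inverse (real (Suc r)) * LL"
              using elim(1) by (simp add: LL_def abs_le_iff)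
            then have "\<bar>(Fminus (\<lambda>i. X i \<omega>) n - ln (real n)) / LL\<bar> \<le> inverse (real (Suc r))"
              using LL0 by (simp add: abs_divide pos_divide_le_eq)
            then show ?case using r by (simp add: LL_def)
          qed
          then show ?thesis by (simp add: eventually_sequentially)
        qed
      qed
    qed
  qed
  show ?thesis using A B by (intro conjI impI)
qed


end
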